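(* Let $A$ and $B$ be rings, $f: A\to B$ a ring homomorphism and $J$ a proper ideal of $B$. Let $S$ be the set of regular central elements of $B$ (central elements that are not zero divisors), and assume $J\cap S\neq\varnothing$. Then $A\bowtie^{f}J$ is a nil-Armendariz ring if and only if both $A$ and $f(A)+J$ are nil-Armendariz rings.
   Context: All rings are associative with identity (not necessarily commutative), ring homomorphisms are unital, and ideals are two-sided. $\mathrm{nil}(R)$ denotes the set of nilpotent elements of a ring $R$, and $\mathrm{nil}(R)[x]$ the set of polynomials all of whose coefficients lie in $\mathrm{nil}(R)$. For a ring homomorphism $f:A\to B$ and an ideal $J$ of $B$, the amalgamation is the subring $A\bowtie^{f}J=\{(a,f(a)+j)\mid a\in A,\ j\in J\}$ of $A\times B$; $f(A)+J=\{f(a)+j: a\in A, j\in J\}$ is a subring of $B$. A ring $R$ is nil-Armendariz if whenever $p(x)=\sum_{i=0}^n a_ix^i$ and $q(x)=\sum_{j=0}^m b_jx^j$ in $R[x]$ satisfy $p(x)q(x)\in\mathrm{nil}(R)[x]$, then $a_ib_j\in\mathrm{nil}(R)$ for all $i,j$. *)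

theory Defs
  imports Main "HOL-Library.Product_Plus"
begin

instantiation prod :: (one, one) one
begin
definition one_prod_def: "1 = (1, 1)"
instance ..
end

instantiation prod :: (times, times) times
begin
definition times_prod_def: "x * y = (fst x * fst y, snd x * snd y)"
instance ..
end

instance prod :: (ring_1, ring_1) ring_1
  by standard (auto simp: one_prod_def times_prod_def zero_prod_def plus_prod_def
      algebra_simps prod_eq_iff)

definition nilpotent :: "'a::ring_1 \<Rightarrow> bool" where
  "nilpotent x \<longleftrightarrow> (\<exists>k::nat. x ^ k = 0)"

definition ring_hom :: "('a::ring_1 \<Rightarrow> 'b::ring_1) \<Rightarrow> bool" where
  "ring_hom f \<longleftrightarrow> f 1 = 1 \<and> (\<forall>x y. f (x + y) = f x + f y) \<and> (\<forall>x y. f (x * y) = f x * f y)"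

definition two_sided_ideal :: "'a::ring_1 set \<Rightarrow> bool" where
  "two_sided_ideal J \<longleftrightarrow> 0 \<in> J \<and> (\<forall>x\<in>J. \<forall>y\<in>J. x + y \<in> J) \<and> (\<forall>x\<in>J. - x \<in> J)
     \<and> (\<forall>r x. x \<in> J \<longrightarrow> r * x \<in> J \<and> x * r \<in> J)"

definition regular_central :: "'a::ring_1 \<Rightarrow> bool" where
  "regular_central s \<longleftrightarrow> (\<forall>x. s * x = x * s) \<and> (\<forall>x. s * x = 0 \<longrightarrow> x = 0) \<and> (\<forall>x. x * s = 0 \<longrightarrow> x = 0)"

text \<open>Amalgamation A \<bowtie>^f J (A is the whole type 'a), and the subring f(A)+J of B.\<close>
definition amalg :: "('a::ring_1 \<Rightarrow> 'b::ring_1) \<Rightarrow> 'b set \<Rightarrow> ('a \<times> 'b) set" where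
  "amalg f J = {(a, f a + j) | a j. j \<in> J}"

definition img_plus :: "('a::ring_1 \<Rightarrow> 'b::ring_1) \<Rightarrow> 'b set \<Rightarrow> 'b set" where
  "img_plus f J = {f a + j | a j. j \<in> J}"

text \<open>A polynomial of degree at most n with coefficients in R is given by a coefficient
  function a restricted to indices 0..n (polynomials over a noncommutative ring,
  the indeterminate commuting with coefficients). The product p q has k-th coefficient
  \<Sum>_{i+j=k} a_i b_j. Nilpotency in R coincides with nilpotency in the ambient ring.\<close>
definition nil_armendariz_on :: "'a::ring_1 set \<Rightarrow> bool" where
  "nil_armendariz_on R \<longleftrightarrow>
     (\<forall>(a::nat \<Rightarrow> 'a) n (b::nat \<Rightarrow> 'a) m.
        (\<forall>i\<le>n. a i \<in> R) \<and> (\<forall>j\<le>m. b j \<in> R) \<and>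
        (\<forall>k\<le>n + m. nilpotent (\<Sum>i\<le>n. \<Sum>j\<le>m. if i + j = k then a i * b j else 0))
        \<longrightarrow> (\<forall>i\<le>n. \<forall>j\<le>m. nilpotent (a i * b j)))"

end

theory Submission
  imports Defs
begin

lemma pow_fst: "fst ((p::'a::ring_1 \<times> 'b::ring_1) ^ k) = fst p ^ k"
  by (induction k) (auto simp: one_prod_def times_prod_def)

lemma pow_snd: "snd ((p::'a::ring_1 \<times> 'b::ring_1) ^ k) = snd p ^ k"
  by (induction k) (auto simp: one_prod_def times_prod_def)

lemma nil_pow_mono: "(x::'a::ring_1) ^ k = 0 \<Longrightarrow> k \<le> m \<Longrightarrow> x ^ m = 0"
  by (metis le_add_diff_inverse mult_zero_left power_add)

lemma nil_pair: "nilpotent (p::'a::ring_1 \<times> 'b::ring_1) \<longleftrightarrow> nilpotent (fst p) \<and> nilpotent (snd p)"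
proof
  assume "nilpotent p"
  then obtain k where "p ^ k = 0" by (auto simp: nilpotent_def)
  then show "nilpotent (fst p) \<and> nilpotent (snd p)"
    unfolding nilpotent_def by (metis pow_fst pow_snd fst_zero snd_zero)
next
  assume "nilpotent (fst p) \<and> nilpotent (snd p)"
  then obtain k l where k: "fst p ^ k = 0" and l: "snd p ^ l = 0" by (auto simp: nilpotent_def)
  have "fst p ^ max k l = 0" "snd p ^ max k l = 0"
    using nil_pow_mono[OF k] nil_pow_mono[OF l] by auto
  then have "p ^ max k l = 0" by (simp add: prod_eq_iff pow_fst pow_snd)
  then show "nilpotent p" by (auto simp: nilpotent_def)
qed

definition C :: "(nat \<Rightarrow> 'a::ring_1) \<Rightarrow> (nat \<Rightarrow> 'a) \<Rightarrow> nat \<Rightarrow> nat \<Rightarrow> nat \<Rightarrow> 'a" where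
  "C a b n m k = (\<Sum>i\<le>n. \<Sum>j\<le>m. if i + j = k then a i * b j else 0)"

lemma C_fst: "fst (C (a::nat \<Rightarrow> 'a::ring_1 \<times> 'b::ring_1) b n m k) = C (\<lambda>i. fst (a i)) (\<lambda>i. fst (b i)) n m k"
  unfolding C_def by (simp add: fst_sum times_prod_def if_distrib cong: if_cong)

lemma C_snd: "snd (C (a::nat \<Rightarrow> 'a::ring_1 \<times> 'b::ring_1) b n m k) = C (\<lambda>i. snd (a i)) (\<lambda>i. snd (b i)) n m k"
  unfolding C_def by (simp add: snd_sum times_prod_def if_distrib cong: if_cong)

lemma hom_zero: "ring_hom f \<Longrightarrow> f 0 = 0"
  unfolding ring_hom_def by (metis add_cancel_right_right add_0)

lemma hom_sum: "ring_hom f \<Longrightarrow> f (sum g A) = (\<Sum>x\<in>A. f (g x))"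
  by (induction A rule: infinite_finite_induct) (auto simp: hom_zero ring_hom_def)

lemma hom_C: "ring_hom f \<Longrightarrow> f (C a b n m k) = C (\<lambda>i. f (a i)) (\<lambda>i. f (b i)) n m k"
proof -
  assume h: "ring_hom f"
  then have m: "\<And>x y. f (x * y) = f x * f y" unfolding ring_hom_def by blast
  show ?thesis unfolding C_def using h by (simp add: hom_sum hom_zero m if_distrib cong: if_cong)
qed

lemma hom_pow: "ring_hom f \<Longrightarrow> f (x ^ k) = f x ^ k"
  by (induction k) (auto simp: ring_hom_def)

lemma hom_nil: "ring_hom f \<Longrightarrow> nilpotent x \<Longrightarrow> nilpotent (f x)"
  unfolding nilpotent_def by (metis hom_pow hom_zero)

lemma central_pow_comm: "(\<forall>x. s * x = x * s) \<Longrightarrow> s ^ k * c = c * (s::'a::ring_1) ^ k"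
proof (induction k)
  case (Suc k)
  have "s ^ Suc k * c = s * (s ^ k * c)" by (simp add: mult.assoc)
  also have "\<dots> = s * (c * s ^ k)" using Suc by simp
  also have "\<dots> = (s * c) * s ^ k" by (simp add: mult.assoc)
  also have "s * c = c * s" using Suc.prems by blast
  finally show ?case by (simp add: mult.assoc power_commutes)
qed simp

lemma central_pow: "(\<forall>x. s * x = x * s) \<Longrightarrow> (s * c) ^ k = s ^ k * (c::'a::ring_1) ^ k"
proof (induction k)
  case (Suc k)
  have "(s * c) ^ Suc k = s * c * (s ^ k * c ^ k)" using Suc by simp
  also have "\<dots> = s * (c * s ^ k) * c ^ k" by (simp add: mult.assoc)
  also have "c * s ^ k = s ^ k * c" using central_pow_comm[OF Suc.prems] by simp
  finally show ?case by (simp add: mult.assoc)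
qed simp

lemma reg_pow: "(\<forall>x. s * x = 0 \<longrightarrow> x = 0) \<Longrightarrow> s ^ k * (z::'a::ring_1) = 0 \<Longrightarrow> z = 0"
  by (induction k) (auto simp: mult.assoc)

lemma C_smult: assumes "\<forall>x. s * x = x * s"
  shows "C (\<lambda>i. s * a i) (\<lambda>i. s * b i) n m k = s * (s * C a b n m (k::nat))"
proof -
  have e: "\<And>i j. s * a i * (s * b j) = s * (s * (a i * b j))"
  proof -
    fix i j
    have "s * a i * (s * b j) = s * (a i * s) * b j" by (simp add: mult.assoc)
    also have "a i * s = s * a i" using assms by metis
    finally show "s * a i * (s * b j) = s * (s * (a i * b j))" by (simp add: mult.assoc)
  qed
  show ?thesis unfolding C_def sum_distrib_left
    by (intro sum.cong refl) (simp add: e)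
qed

theorem theorem3p1:
  fixes f :: "'a::ring_1 \<Rightarrow> 'b::ring_1" and J :: "'b set"
  assumes "ring_hom f"
    and "two_sided_ideal J"
    and "J \<noteq> UNIV"
    and "J \<inter> {s. regular_central s} \<noteq> {}"
  shows "nil_armendariz_on (amalg f J) \<longleftrightarrow>
           nil_armendariz_on (UNIV :: 'a set) \<and> nil_armendariz_on (img_plus f J)"
proof -
  have NA: "\<And>R::'c::ring_1 set. nil_armendariz_on R \<longleftrightarrow>
     (\<forall>(a::nat \<Rightarrow> 'c) n (b::nat \<Rightarrow> 'c) m.
        (\<forall>i\<le>n. a i \<in> R) \<and> (\<forall>j\<le>m. b j \<in> R) \<and>
        (\<forall>k\<le>n + m. nilpotent (C a b n m k))
        \<longrightarrow> (\<forall>i\<le>n. \<forall>j\<le>m. nilpotent (a i * b j)))"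
    by (simp add: nil_armendariz_on_def C_def)
  obtain s where sJ: "s \<in> J" and sc: "\<forall>x. s * x = x * s" and sr: "\<forall>x. s * x = 0 \<longrightarrow> x = 0"
    using assms(4) unfolding regular_central_def by blast
  have J0: "0 \<in> J" and Jmul: "\<And>r x. x \<in> J \<Longrightarrow> r * x \<in> J \<and> x * r \<in> J"
    using assms(2) unfolding two_sided_ideal_def by auto
  have f0: "f 0 = 0" using hom_zero[OF assms(1)] .
  show ?thesis
  proof
    assume H: "nil_armendariz_on (amalg f J)"
    have H': "\<And>a n b m. (\<forall>i\<le>n. a i \<in> amalg f J) \<Longrightarrow> (\<forall>j\<le>m. b j \<in> amalg f J) \<Longrightarrow>
        (\<forall>k\<le>n + m. nilpotent (C a b n m k)) \<Longrightarrow> (\<forall>i\<le>n. \<forall>j\<le>m. nilpotent (a i * b j))"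
      using H unfolding NA by blast
    have A: "nil_armendariz_on (UNIV :: 'a set)"
      unfolding NA
    proof (intro allI impI)
      fix a :: "nat \<Rightarrow> 'a" and n b m i j
      assume P: "(\<forall>i\<le>n. a i \<in> UNIV) \<and> (\<forall>j\<le>m. b j \<in> UNIV) \<and> (\<forall>k\<le>n + m. nilpotent (C a b n m k))"
        and ij: "i \<le> n" "j \<le> m"
      define a' where "a' = (\<lambda>i. (a i, f (a i)))"
      define b' where "b' = (\<lambda>i. (b i, f (b i)))"
      have mem: "\<And>x. (x, f x) \<in> amalg f J" unfolding amalg_def using J0 by force
      have "\<forall>k\<le>n + m. nilpotent (C a' b' n m k)"
      proof (intro allI impI)
        fix k assume "k \<le> n + m"
        then have N: "nilpotent (C a b n m k)" using P by blast
        show "nilpotent (C a' b' n m k)"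
          unfolding nil_pair C_fst C_snd a'_def b'_def
          using N hom_nil[OF assms(1) N] hom_C[OF assms(1)] by simp
      qed
      then have "nilpotent (a' i * b' j)" using H'[of n a' m b'] mem ij unfolding a'_def b'_def by blast
      then show "nilpotent (a i * b j)" unfolding nil_pair a'_def b'_def by (simp add: times_prod_def)
    qed
    have B: "nil_armendariz_on (img_plus f J)"
      unfolding NA
    proof (intro allI impI)
      fix a :: "nat \<Rightarrow> 'b" and n b m i j
      assume P: "(\<forall>i\<le>n. a i \<in> img_plus f J) \<and> (\<forall>j\<le>m. b j \<in> img_plus f J) \<and> (\<forall>k\<le>n + m. nilpotent (C a b n m k))"
        and ij: "i \<le> n" "j \<le> m"
      define a' where "a' = (\<lambda>i. (0::'a, s * a i))"
      define b' where "b' = (\<lambda>i. (0::'a, s * b i))"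
      have mem: "\<And>x. (0, s * x) \<in> amalg f J" unfolding amalg_def using Jmul[OF sJ] f0
        by (metis (mono_tags, lifting) add_0 mem_Collect_eq)
      have "\<forall>k\<le>n + m. nilpotent (C a' b' n m k)"
      proof (intro allI impI)
        fix k assume "k \<le> n + m"
        then have N: "nilpotent (C a b n m k)" using P by blast
        then obtain l where l: "C a b n m k ^ l = 0" unfolding nilpotent_def by blast
        have "(s * (s * C a b n m k)) ^ l = 0"
          using central_pow[OF sc] l by simp
        then have "nilpotent (s * (s * C a b n m k))" unfolding nilpotent_def by blast
        moreover have "C (\<lambda>i. 0::'a) (\<lambda>i. 0) n m k = 0" unfolding C_def by (simp only: mult_zero_left if_cancel sum.neutral_const)
        moreover have "nilpotent (0::'a)" unfolding nilpotent_def by (rule exI[of _ 1]) simp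
        ultimately show "nilpotent (C a' b' n m k)"
          unfolding nil_pair C_fst C_snd a'_def b'_def
          using C_smult[OF sc] by simp
      qed
      then have "nilpotent (a' i * b' j)" using H'[of n a' m b'] mem ij unfolding a'_def b'_def by blast
      then have "nilpotent (s * a i * (s * b j))" unfolding nil_pair a'_def b'_def by (simp add: times_prod_def)
      then obtain l where "(s * a i * (s * b j)) ^ l = 0" unfolding nilpotent_def by blast
      moreover have "s * a i * (s * b j) = s * (s * (a i * b j))" using sc by (metis mult.assoc)
      ultimately have "s ^ l * (s ^ l * (a i * b j) ^ l) = 0" using central_pow[OF sc] by simp
      then have "(a i * b j) ^ l = 0" using reg_pow[OF sr] by blast
      then show "nilpotent (a i * b j)" unfolding nilpotent_def by blast
    qed
    show "nil_armendariz_on (UNIV :: 'a set) \<and> nil_armendariz_on (img_plus f J)" using A B by blast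
  next
    assume H: "nil_armendariz_on (UNIV :: 'a set) \<and> nil_armendariz_on (img_plus f J)"
    note HA = conjunct1[OF H, unfolded NA, rule_format]
    note HB = conjunct2[OF H, unfolded NA, rule_format]
    have sub: "\<And>p. p \<in> amalg f J \<Longrightarrow> snd p \<in> img_plus f J"
      unfolding amalg_def img_plus_def by fastforce
    show "nil_armendariz_on (amalg f J)"
      unfolding NA
    proof (intro allI impI)
      fix a :: "nat \<Rightarrow> 'a \<times> 'b" and n b m i j
      assume P: "(\<forall>i\<le>n. a i \<in> amalg f J) \<and> (\<forall>j\<le>m. b j \<in> amalg f J) \<and> (\<forall>k\<le>n + m. nilpotent (C a b n m k))"
        and ij: "i \<le> n" "j \<le> m"
      have N: "\<forall>k\<le>n + m. nilpotent (C (\<lambda>i. fst (a i)) (\<lambda>i. fst (b i)) n m k)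
          \<and> nilpotent (C (\<lambda>i. snd (a i)) (\<lambda>i. snd (b i)) n m k)"
        using P unfolding nil_pair C_fst C_snd by blast
      have N1: "\<forall>k\<le>n + m. nilpotent (C (\<lambda>i. fst (a i)) (\<lambda>i. fst (b i)) n m k)"
        and N2: "\<forall>k\<le>n + m. nilpotent (C (\<lambda>i. snd (a i)) (\<lambda>i. snd (b i)) n m k)"
        using N by blast+
      have S1: "\<forall>i\<le>n. snd (a i) \<in> img_plus f J" and S2: "\<forall>j\<le>m. snd (b j) \<in> img_plus f J"
        using P sub by blast+
      have 1: "nilpotent (fst (a i) * fst (b j))"
        using HA[where a="\<lambda>i. fst (a i)" and b="\<lambda>i. fst (b i)" and n=n and m=m and i=i and j=j] N1 ij by simp
      have 2: "nilpotent (snd (a i) * snd (b j))"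
        using HB[where a="\<lambda>i. snd (a i)" and b="\<lambda>i. snd (b i)" and n=n and m=m and i=i and j=j] N2 S1 S2 ij by simp
      show "nilpotent (a i * b j)" unfolding nil_pair using 1 2 by (simp add: times_prod_def)
    qed
  qed
qed

end
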